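(* Let $V$ be an oriented $4$-dimensional real inner product space with an oriented orthonormal basis $f^1,f^2,f^3,f^4$ of $V^*$ and $2$-forms $\omega_1=f^1\wedge f^2+f^3\wedge f^4$, $\omega_2=f^1\wedge f^3+f^4\wedge f^2$, $\omega_3=f^1\wedge f^4+f^2\wedge f^3$, and let $e_1,e_2,e_3$ be the standard basis of $\mathbb{R}^3$. Consider the linear maps $A:V^*\otimes\Lambda^3V^*\to\Lambda^4V^*$, $A(\gamma\otimes\eta)=\gamma\wedge\eta$, and $B:S^2V^*\otimes\mathbb{R}^3\to V^*\otimes\Lambda^3V^*$, $$B:\ h^k_{pq}f^pf^q\otimes e_k\longmapsto h^k_{pq}\big[f^p\otimes(f^q\wedge\omega_k)+f^q\otimes(f^p\wedge\omega_k)\big]$$ (summation over repeated indices, $h^k_{pq}=h^k_{qp}$). Then the map $B$ surjects onto the kernel of $A$.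
   Context: $S^2V^*$ is the symmetric square of $V^*$, with $f^pf^q$ the symmetric product. $\omega_1,\omega_2,\omega_3$ are the standard hyperkähler (self-dual) $2$-forms on $V$. *)

theory Defs
  imports Complex_Main
begin

text \<open>Coordinate model of the exterior algebra of V* with respect to the oriented
orthonormal basis f^1..f^4 (indexed 0..3 here). A form is given by its coefficients
on index sets: alpha S is the coefficient of f^{i1} wedge ... wedge f^{ik}, where
S = {i1 < ... < ik}.\<close>

type_synonym form = "nat set \<Rightarrow> real"

definition shuffle_sign :: "nat set \<Rightarrow> nat set \<Rightarrow> real" where
  "shuffle_sign I J = (-1) ^ card {(i, j). i \<in> I \<and> j \<in> J \<and> j < i}"

definition wedge :: "form \<Rightarrow> form \<Rightarrow> form" where
  "wedge \<alpha> \<beta> S = (\<Sum>I\<in>Pow S. shuffle_sign I (S - I) * \<alpha> I * \<beta> (S - I))"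

definition form_add :: "form \<Rightarrow> form \<Rightarrow> form" where
  "form_add \<alpha> \<beta> = (\<lambda>S. \<alpha> S + \<beta> S)"

definition is_form :: "nat \<Rightarrow> form \<Rightarrow> bool" where
  "is_form k \<alpha> \<longleftrightarrow> (\<forall>S. \<alpha> S \<noteq> 0 \<longrightarrow> S \<subseteq> {0..<4} \<and> card S = k)"

definition fb :: "nat \<Rightarrow> form" where
  "fb i = (\<lambda>S. if S = {i} then 1 else 0)"

definition omega :: "nat \<Rightarrow> form" where
  "omega k = (if k = 0 then form_add (wedge (fb 0) (fb 1)) (wedge (fb 2) (fb 3))
              else if k = 1 then form_add (wedge (fb 0) (fb 2)) (wedge (fb 3) (fb 1))
              else form_add (wedge (fb 0) (fb 3)) (wedge (fb 1) (fb 2)))"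

text \<open>An element of V* tensor Lambda^3 V* is written uniquely as
  sum_i f^(i+1) tensor T i, with T i a 3-form; we represent it by T.\<close>
type_synonym tensor13 = "nat \<Rightarrow> form"

definition valid_T :: "tensor13 \<Rightarrow> bool" where
  "valid_T T \<longleftrightarrow> (\<forall>i. (i \<ge> 4 \<longrightarrow> T i = (\<lambda>_. 0)) \<and> is_form 3 (T i))"

definition mapA :: "tensor13 \<Rightarrow> form" where
  "mapA T = (\<lambda>S. \<Sum>i<4. wedge (fb i) (T i) S)"

text \<open>An element of S^2 V* tensor R^3 is sum h^k_pq f^p f^q tensor e_k with
  h^k_pq = h^k_qp; represented by h k p q (k<3, p,q<4), symmetric in p q.\<close>
definition valid_h :: "(nat \<Rightarrow> nat \<Rightarrow> nat \<Rightarrow> real) \<Rightarrow> bool" where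
  "valid_h h \<longleftrightarrow> (\<forall>k p q. h k p q = h k q p \<and>
      (\<not> (k < 3 \<and> p < 4 \<and> q < 4) \<longrightarrow> h k p q = 0))"

definition mapB :: "(nat \<Rightarrow> nat \<Rightarrow> nat \<Rightarrow> real) \<Rightarrow> tensor13" where
  "mapB h = (\<lambda>i S. \<Sum>k<3. \<Sum>p<4. \<Sum>q<4. h k p q *
      ((if p = i then wedge (fb q) (omega k) S else 0) +
       (if q = i then wedge (fb p) (omega k) S else 0)))"

end

theory Submission
  imports Defs
begin

lemma shuffle_single: "shuffle_sign {q} X = (-1) ^ card {j\<in>X. j < q}"
proof -
  have "{(i, j). i \<in> {q} \<and> j \<in> X \<and> j < i} = Pair q ` {j\<in>X. j < q}" by auto
  moreover have "inj (Pair q)" by (auto simp: inj_def)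
  ultimately show ?thesis unfolding shuffle_sign_def by (simp add: card_image inj_on_def)
qed

lemma wedge_fb: "wedge (fb q) \<beta> S = (if finite S \<and> q \<in> S then shuffle_sign {q} (S - {q}) * \<beta> (S - {q}) else 0)"
proof (cases "finite S")
  case True
  have "wedge (fb q) \<beta> S = (\<Sum>I\<in>Pow S. if I = {q} then shuffle_sign I (S - I) * \<beta> (S - I) else 0)"
    unfolding wedge_def fb_def by (intro sum.cong) auto
  also have "\<dots> = (if {q} \<in> Pow S then shuffle_sign {q} (S - {q}) * \<beta> (S - {q}) else 0)"
    using True by (simp only: sum.delta finite_Pow_iff)
  finally show ?thesis using True by auto
next
  case False
  then show ?thesis unfolding wedge_def by simp
qed




lemma e_aux: "(finite X \<and> a \<in> X \<and> X - {a} = {b}) \<longleftrightarrow> (a \<noteq> b \<and> X = {a,b})"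
proof
  assume h: "finite X \<and> a \<in> X \<and> X - {a} = {b}"
  then have "X = insert a (X - {a})" by blast
  with h show "a \<noteq> b \<and> X = {a,b}" by blast
next
  assume "a \<noteq> b \<and> X = {a,b}" then show "finite X \<and> a \<in> X \<and> X - {a} = {b}" by blast
qed

lemma wedge_fb_fb: "wedge (fb a) (fb b) X = (if a \<noteq> b \<and> X = {a,b} then (if b < a then -1 else 1) else 0)"
proof -
  have c: "{j \<in> {b}. j < a} = (if b < a then {b} else {})" by auto
  have "wedge (fb a) (fb b) X = (if finite X \<and> a \<in> X \<and> X - {a} = {b} then shuffle_sign {a} (X - {a}) else 0)"
    by (subst wedge_fb) (simp add: fb_def)
  also have "\<dots> = (if a \<noteq> b \<and> X = {a,b} then shuffle_sign {a} {b} else 0)"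
    using e_aux[of X a b] by auto
  finally show ?thesis unfolding shuffle_single c by simp
qed


lemma omega_eval: "omega k X = (if k = 0 then (if X = {0,1} then 1 else 0) + (if X = {2,3} then 1 else 0)
   else if k = 1 then (if X = {0,2} then 1 else 0) + (if X = {3,1} then -1 else 0)
   else (if X = {0,3} then 1 else 0) + (if X = {1,2} then 1 else 0))"
  unfolding omega_def form_add_def wedge_fb_fb by simp



lemma filt_ins: "{j \<in> insert a X. P j} = (if P a then insert a {j \<in> X. P j} else {j \<in> X. P j})" by auto
lemma filt_empty: "{j \<in> {}. P j} = {}" by auto

lemma shuffle_single2: "shuffle_sign {q} X = (-1) ^ card (X \<inter> {..<q})"
  unfolding shuffle_single by (metis Collect_conj_eq Collect_mem_eq lessThan_def)

lemmas ev = omega_eval doubleton_eq_iff Int_insert_left insert_Diff_if shuffle_single2 wedge_fb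


lemma lt3: "{..<3::nat} = {0,1,2}" by auto
lemma lt4: "{..<4::nat} = {0,1,2,3}" by auto
lemma at4: "{0..<4::nat} = {0,1,2,3}" by auto

lemma set4: assumes "S \<subseteq> {0..<4::nat}" "card S = 4" shows "S = {0,1,2,3}"
proof -
  have "S = {0..<4}" using assms by (intro card_subset_eq) auto
  then show ?thesis using at4 by simp
qed

lemma set3: assumes "S \<subseteq> {0..<4::nat}" "card S = 3"
  shows "S = {1,2,3} \<or> S = {0,2,3} \<or> S = {0,1,3} \<or> S = {0,1,2}"
proof -
  have "S \<noteq> {0..<4}" using assms(2) by auto
  then obtain m where m: "m \<in> {0..<4}" "m \<notin> S" using assms(1) by blast
  have "S \<subseteq> {0..<4} - {m}" using assms m by blast
  moreover have "card ({0..<4::nat} - {m}) = 3" using m by simp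
  ultimately have eq: "S = {0..<4} - {m}" using assms by (intro card_subset_eq) auto
  have "m = 0 \<or> m = 1 \<or> m = 2 \<or> m = 3" using m by auto
  then show ?thesis unfolding eq at4 by (elim disjE) (simp_all add: insert_Diff_if)
qed

lemma wfo_supp: assumes "wedge (fb q) (omega k) S \<noteq> 0" "q < 4"
  shows "S \<subseteq> {0..<4} \<and> card S = 3"
proof -
  have f: "finite S" "q \<in> S" and o: "omega k (S - {q}) \<noteq> 0"
    using assms(1) unfolding wedge_fb by (simp_all split: if_splits)
  have "S - {q} = {0,1} \<or> S - {q} = {2,3} \<or> S - {q} = {0,2} \<or> S - {q} = {3,1} \<or> S - {q} = {0,3} \<or> S - {q} = {1,2}"
    using o unfolding omega_eval by (simp only: split: if_splits) simp_all
  then have h2: "S - {q} \<subseteq> {0..<4}" "card (S - {q}) = 2" by (elim disjE; simp)+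
  have "card (S - {q}) = card S - 1" using f by (simp add: card_Diff_singleton)
  moreover have "card S \<ge> 1" using f by (metis card_0_eq empty_iff less_one not_less)
  ultimately have "card S = 3" using h2 by linarith
  moreover have "S \<subseteq> {0..<4}" using h2 f assms(2) by auto
  ultimately show ?thesis by simp
qed

lemma mapB_supp: assumes "\<not> (S \<subseteq> {0..<4} \<and> card S = 3)" shows "mapB h i S = 0"
proof -
  have *: "\<And>q k. q < 4 \<Longrightarrow> wedge (fb q) (omega k) S = 0" using wfo_supp assms by blast
  show ?thesis unfolding mapB_def by (intro sum.neutral ballI) (simp add: *)
qed

lemma mapB_big: assumes "i \<ge> 4" shows "mapB h i S = 0"
  unfolding mapB_def using assms by simp

lemma mB_0_0: "mapB h 0 {1,2,3} = (1) * h 0 0 1 + (1) * h 0 1 0 + (1) * h 1 0 2 + (1) * h 1 2 0 + (1) * h 2 0 3 + (1) * h 2 3 0"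
  by (simp add: mapB_def lt3 lt4 ev)

lemma mB_0_1: "mapB h 0 {0,2,3} = (2) * h 0 0 0 + (1) * h 1 0 3 + (1) * h 1 3 0 + (-1) * h 2 0 2 + (-1) * h 2 2 0"
  by (simp add: mapB_def lt3 lt4 ev)

lemma mB_0_2: "mapB h 0 {0,1,3} = (1) * h 0 0 3 + (1) * h 0 3 0 + (-2) * h 1 0 0 + (-1) * h 2 0 1 + (-1) * h 2 1 0"
  by (simp add: mapB_def lt3 lt4 ev)

lemma mB_0_3: "mapB h 0 {0,1,2} = (1) * h 0 0 2 + (1) * h 0 2 0 + (-1) * h 1 0 1 + (-1) * h 1 1 0 + (2) * h 2 0 0"
  by (simp add: mapB_def lt3 lt4 ev)

lemma mB_1_0: "mapB h 1 {1,2,3} = (2) * h 0 1 1 + (1) * h 1 1 2 + (1) * h 1 2 1 + (1) * h 2 1 3 + (1) * h 2 3 1"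
  by (simp add: mapB_def lt3 lt4 ev)

lemma mB_1_1: "mapB h 1 {0,2,3} = (1) * h 0 0 1 + (1) * h 0 1 0 + (1) * h 1 1 3 + (1) * h 1 3 1 + (-1) * h 2 1 2 + (-1) * h 2 2 1"
  by (simp add: mapB_def lt3 lt4 ev)

lemma mB_1_2: "mapB h 1 {0,1,3} = (1) * h 0 1 3 + (1) * h 0 3 1 + (-1) * h 1 0 1 + (-1) * h 1 1 0 + (-2) * h 2 1 1"
  by (simp add: mapB_def lt3 lt4 ev)

lemma mB_1_3: "mapB h 1 {0,1,2} = (1) * h 0 1 2 + (1) * h 0 2 1 + (-2) * h 1 1 1 + (1) * h 2 0 1 + (1) * h 2 1 0"
  by (simp add: mapB_def lt3 lt4 ev)

lemma mB_2_0: "mapB h 2 {1,2,3} = (1) * h 0 1 2 + (1) * h 0 2 1 + (2) * h 1 2 2 + (1) * h 2 2 3 + (1) * h 2 3 2"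
  by (simp add: mapB_def lt3 lt4 ev)

lemma mB_2_1: "mapB h 2 {0,2,3} = (1) * h 0 0 2 + (1) * h 0 2 0 + (1) * h 1 2 3 + (1) * h 1 3 2 + (-2) * h 2 2 2"
  by (simp add: mapB_def lt3 lt4 ev)

lemma mB_2_2: "mapB h 2 {0,1,3} = (1) * h 0 2 3 + (1) * h 0 3 2 + (-1) * h 1 0 2 + (-1) * h 1 2 0 + (-1) * h 2 1 2 + (-1) * h 2 2 1"
  by (simp add: mapB_def lt3 lt4 ev)

lemma mB_2_3: "mapB h 2 {0,1,2} = (2) * h 0 2 2 + (-1) * h 1 1 2 + (-1) * h 1 2 1 + (1) * h 2 0 2 + (1) * h 2 2 0"
  by (simp add: mapB_def lt3 lt4 ev)

lemma mB_3_0: "mapB h 3 {1,2,3} = (1) * h 0 1 3 + (1) * h 0 3 1 + (1) * h 1 2 3 + (1) * h 1 3 2 + (2) * h 2 3 3"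
  by (simp add: mapB_def lt3 lt4 ev)

lemma mB_3_1: "mapB h 3 {0,2,3} = (1) * h 0 0 3 + (1) * h 0 3 0 + (2) * h 1 3 3 + (-1) * h 2 2 3 + (-1) * h 2 3 2"
  by (simp add: mapB_def lt3 lt4 ev)

lemma mB_3_2: "mapB h 3 {0,1,3} = (2) * h 0 3 3 + (-1) * h 1 0 3 + (-1) * h 1 3 0 + (-1) * h 2 1 3 + (-1) * h 2 3 1"
  by (simp add: mapB_def lt3 lt4 ev)

lemma mB_3_3: "mapB h 3 {0,1,2} = (1) * h 0 2 3 + (1) * h 0 3 2 + (-1) * h 1 1 3 + (-1) * h 1 3 1 + (1) * h 2 0 3 + (1) * h 2 3 0"
  by (simp add: mapB_def lt3 lt4 ev)

lemmas mB = mB_0_0 mB_0_1 mB_0_2 mB_0_3 mB_1_0 mB_1_1 mB_1_2 mB_1_3 mB_2_0 mB_2_1 mB_2_2 mB_2_3 mB_3_0 mB_3_1 mB_3_2 mB_3_3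

definition gT :: "tensor13 \<Rightarrow> nat \<Rightarrow> nat \<Rightarrow> nat \<Rightarrow> real" where
  "gT T k a b = (
    if k = 0 \<and> a = 0 \<and> b = 0 then (1/2) * T 0 {0,2,3}
    else if k = 1 \<and> a = 0 \<and> b = 0 then (-1/2) * T 0 {0,1,3} + (1/2) * T 3 {0,2,3}
    else if k = 2 \<and> a = 0 \<and> b = 0 then (1/2) * T 0 {0,1,2} + (-1/2) * T 1 {0,1,3} + (-1/2) * T 2 {0,2,3} + (1/2) * T 3 {1,2,3}
    else if k = 0 \<and> a = 1 \<and> b = 1 then (1/2) * T 1 {1,2,3}
    else if k = 0 \<and> a = 0 \<and> b = 1 then (1/2) * T 1 {0,2,3}
    else if k = 1 \<and> a = 0 \<and> b = 1 then (-1/2) * T 1 {0,1,3} + (1/2) * T 3 {1,2,3}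
    else if k = 1 \<and> a = 1 \<and> b = 1 then (-1/2) * T 1 {0,1,2} + (1/2) * T 2 {1,2,3}
    else if k = 0 \<and> a = 1 \<and> b = 2 then (1/2) * T 2 {1,2,3}
    else if k = 0 \<and> a = 0 \<and> b = 2 then (1/2) * T 2 {0,2,3}
    else if k = 1 \<and> a = 0 \<and> b = 2 then (-1/2) * T 2 {0,1,3} + (1/2) * T 3 {0,1,2}
    else if k = 0 \<and> a = 2 \<and> b = 2 then (1/2) * T 2 {0,1,2}
    else if k = 0 \<and> a = 1 \<and> b = 3 then (1/2) * T 3 {1,2,3}
    else if k = 0 \<and> a = 0 \<and> b = 3 then (1/2) * T 3 {0,2,3}
    else if k = 0 \<and> a = 3 \<and> b = 3 then (1/2) * T 3 {0,1,3}
    else if k = 0 \<and> a = 2 \<and> b = 3 then (1/2) * T 3 {0,1,2}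
    else 0)"



definition hT :: "tensor13 \<Rightarrow> nat \<Rightarrow> nat \<Rightarrow> nat \<Rightarrow> real" where
  "hT T k p q = (if k < 3 \<and> p < 4 \<and> q < 4 then gT T k (min p q) (max p q) else 0)"

lemma mapA_expl: "mapA T {0,1,2,3} = T 0 {1,2,3} - T 1 {0,2,3} + T 2 {0,1,3} - T 3 {0,1,2}"
  unfolding mapA_def by (simp add: lt4 ev)

lemma mapB_in: assumes "valid_h h" shows "valid_T (mapB h) \<and> mapA (mapB h) = (\<lambda>_. 0)"
proof
  show "valid_T (mapB h)" unfolding valid_T_def is_form_def
    using mapB_big mapB_supp by blast
next
  have sym: "\<And>k p q. h k p q = h k q p" using assms unfolding valid_h_def by blast
  show "mapA (mapB h) = (\<lambda>_. 0)"
  proof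
    fix S :: "nat set"
    show "mapA (mapB h) S = 0"
    proof (cases "S = {0,1,2,3}")
      case True
      show ?thesis unfolding True mapA_expl mB
        by (simp add: sym[of 0 1 0] sym[of 0 2 0] sym[of 0 2 1] sym[of 0 3 0] sym[of 0 3 1] sym[of 0 3 2] sym[of 1 1 0] sym[of 1 2 0] sym[of 1 2 1] sym[of 1 3 0] sym[of 1 3 1] sym[of 1 3 2] sym[of 2 1 0] sym[of 2 2 0] sym[of 2 2 1] sym[of 2 3 0] sym[of 2 3 1] sym[of 2 3 2])
    next
      case False
      have "wedge (fb i) (mapB h i) S = 0" if i: "i < 4" for i
      proof (cases "finite S \<and> i \<in> S")
        case True
        have "\<not> (S - {i} \<subseteq> {0..<4} \<and> card (S - {i}) = 3)"
        proof
          assume a: "S - {i} \<subseteq> {0..<4} \<and> card (S - {i}) = 3"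
          then have "S \<subseteq> {0..<4}" using i by auto
          moreover have "card S = 4"
          proof -
            have "card (S - {i}) = card S - 1" using True by (simp add: card_Diff_singleton)
            moreover have "card S \<ge> 1" using True by (metis card_0_eq empty_iff less_one not_less)
            ultimately show ?thesis using a by linarith
          qed
          ultimately show False using set4 False by blast
        qed
        then have "mapB h i (S - {i}) = 0" by (rule mapB_supp)
        then show ?thesis by (simp add: wedge_fb)
      next
        case False
        show ?thesis unfolding wedge_fb if_not_P[OF False] by simp
      qed
      then show ?thesis unfolding mapA_def by simp
    qed
  qed
qed


lemma hT_valid: "valid_h (hT T)"
  unfolding valid_h_def
proof (intro allI conjI impI)
  fix k p q :: nat
  have e: "min q p = min p q" "max q p = max p q" by (simp_all add: min.commute max.commute)
  show "hT T k p q = hT T k q p" unfolding hT_def e by auto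
  assume a: "\<not> (k < 3 \<and> p < 4 \<and> q < 4)"
  show "hT T k p q = 0" unfolding hT_def if_not_P[OF a] ..
qed

lemma mapB_hT: assumes "valid_T T" "mapA T = (\<lambda>_. 0)" shows "mapB (hT T) = T"
proof -
  have "mapA T {0,1,2,3} = 0" using assms(2) by simp
  then have ker: "T 0 {1,2,3} - T 1 {0,2,3} + T 2 {0,1,3} - T 3 {0,1,2} = 0"
    unfolding mapA_expl .
  have ker1: "T 0 {1,2,3} = T 1 {0,2,3} - T 2 {0,1,3} + T 3 {0,1,2}" using ker by linarith
  have ker2: "T 0 {Suc 0,2,3} = T (Suc 0) {0,2,3} - T 2 {0,Suc 0,3} + T 3 {0,Suc 0,2}" using ker by simp
  show ?thesis
  proof (intro ext)
    fix i S
    show "mapB (hT T) i S = T i S"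
    proof (cases "i < 4")
      case False
      then show ?thesis using assms(1) mapB_big unfolding valid_T_def by simp
    next
      case i: True
      show ?thesis
      proof (cases "S \<subseteq> {0..<4} \<and> card S = 3")
        case False
        then show ?thesis using assms(1) mapB_supp unfolding valid_T_def is_form_def by metis
      next
        case True
        then have S: "S = {1,2,3} \<or> S = {0,2,3} \<or> S = {0,1,3} \<or> S = {0,1,2}" using set3 by blast
        have "i = 0 \<or> i = 1 \<or> i = 2 \<or> i = 3" using i by auto
        then show ?thesis using S
          by (elim disjE; hypsubst; unfold mB; simp add: hT_def gT_def ker1 ker2)
      qed
    qed
  qed
qed

theorem propositionA1:
  shows "mapB ` {h. valid_h h} = {T. valid_T T \<and> mapA T = (\<lambda>_. 0)}"
proof
  show "mapB ` {h. valid_h h} \<subseteq> {T. valid_T T \<and> mapA T = (\<lambda>_. 0)}"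
    using mapB_in by blast
  show "{T. valid_T T \<and> mapA T = (\<lambda>_. 0)} \<subseteq> mapB ` {h. valid_h h}"
  proof
    fix T assume "T \<in> {T. valid_T T \<and> mapA T = (\<lambda>_. 0)}"
    then have "mapB (hT T) = T" using mapB_hT by blast
    then show "T \<in> mapB ` {h. valid_h h}" using hT_valid by (metis image_eqI mem_Collect_eq)
  qed
qed

end
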